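(* For every $A$-lattice $\Lambda$ of rank $r$ in $C_\infty$, the subgroup $\operatorname{sgn}(\Lambda)$ of the group of roots of unity of $C_\infty$ generated by $\{\operatorname{sgn}(\lambda):0\neq\lambda\in\Lambda\}$ is finite.
   Context: $\mathbb{F}=\mathbb{F}_q$; $K$ a global function field with exact constant field $\mathbb{F}$; $\infty$ a place of degree $d_\infty$; $A$ the ring of elements of $K$ regular off $\infty$; $C_\infty$ the completed algebraic closure of $K_\infty$ with $|\pi|^{-1}=q^{d_\infty}$ for a fixed uniformizer $\pi\in K$; $\log x=\log_q|x|$. Rank-$r$ $A$-lattices in $C_\infty$ are finitely generated discrete $A$-submodules of rank $r$. Fix compatible roots $\pi^{1/n}$ so that $\pi^x$ is defined for $x\in\mathbb{Q}$. For $|z|=1$, $\operatorname{sgn}(z)$ is the unique root of unity with $|z/\operatorname{sgn}(z)-1|<1$; for $z\in C_\infty^*$, $\operatorname{sgn}(z):=\operatorname{sgn}(z\pi^{\log z/d_\infty})$. *)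

theory Defs
  imports Complex_Main "HOL-Computational_Algebra.Polynomial"
begin

text \<open>The ambient field C_infinity is modelled as a type 'c of class field together with
  an absolute value absv on it.  All arithmetic notions are relative to this.\<close>

definition is_subfield :: "'c::field set \<Rightarrow> bool" where
  "is_subfield S \<longleftrightarrow> 0 \<in> S \<and> 1 \<in> S \<and> (\<forall>x\<in>S. \<forall>y\<in>S. x + y \<in> S \<and> x * y \<in> S)
     \<and> (\<forall>x\<in>S. - x \<in> S \<and> inverse x \<in> S)"

definition algebraic_over :: "'c::field set \<Rightarrow> 'c \<Rightarrow> bool" where
  "algebraic_over S x \<longleftrightarrow> (\<exists>p. p \<noteq> 0 \<and> set (coeffs p) \<subseteq> S \<and> poly p x = 0)"

definition abs_value_on :: "'c::field set \<Rightarrow> ('c \<Rightarrow> real) \<Rightarrow> bool" where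
  "abs_value_on S v \<longleftrightarrow> (\<forall>x\<in>S. v x \<ge> 0 \<and> (v x = 0 \<longleftrightarrow> x = 0))
     \<and> (\<forall>x\<in>S. \<forall>y\<in>S. v (x * y) = v x * v y \<and> v (x + y) \<le> v x + v y)"

definition nontrivial_on :: "'c::field set \<Rightarrow> ('c \<Rightarrow> real) \<Rightarrow> bool" where
  "nontrivial_on S v \<longleftrightarrow> (\<exists>x\<in>S. x \<noteq> 0 \<and> v x \<noteq> 1)"

definition equiv_abs_on :: "'c::field set \<Rightarrow> ('c \<Rightarrow> real) \<Rightarrow> ('c \<Rightarrow> real) \<Rightarrow> bool" where
  "equiv_abs_on S v w \<longleftrightarrow> (\<exists>s>0. \<forall>x\<in>S. w x = v x powr s)"

definition rat_fun_field :: "'c::field set \<Rightarrow> 'c \<Rightarrow> 'c set" where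
  "rat_fun_field F t = {poly p t / poly q t | p q. set (coeffs p) \<subseteq> F \<and> set (coeffs q) \<subseteq> F \<and> poly q t \<noteq> 0}"

text \<open>K is a global function field with exact constant field F (F finite):
  K is a finite extension of F(t) for some t transcendental over F, and F is
  algebraically closed in K.\<close>
definition global_function_field :: "'c::field set \<Rightarrow> 'c set \<Rightarrow> bool" where
  "global_function_field F K \<longleftrightarrow> is_subfield F \<and> finite F \<and> is_subfield K \<and> F \<subseteq> K
     \<and> (\<exists>t\<in>K. \<not> algebraic_over F t \<and>
          (\<exists>B. finite B \<and> B \<subseteq> K \<and>
              K = {\<Sum>b\<in>B. c b * b | c. \<forall>b\<in>B. c b \<in> rat_fun_field F t}))
     \<and> (\<forall>x\<in>K. algebraic_over F x \<longrightarrow> x \<in> F)"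

text \<open>The ring A of elements of K regular away from the place infinity (given by absv):
  |x|_v \<le> 1 for every place v of K (trivial on F) other than infinity.\<close>
definition ring_A :: "('c::field \<Rightarrow> real) \<Rightarrow> 'c set \<Rightarrow> 'c set \<Rightarrow> 'c set" where
  "ring_A absv F K = {x\<in>K. \<forall>v. abs_value_on K v \<and> nontrivial_on K v \<and> (\<forall>y\<in>F. y \<noteq> 0 \<longrightarrow> v y = 1)
        \<and> \<not> equiv_abs_on K absv v \<longrightarrow> v x \<le> 1}"

definition closure_abs :: "('c::field \<Rightarrow> real) \<Rightarrow> 'c set \<Rightarrow> 'c set" where
  "closure_abs absv S = {x. \<forall>e>0. \<exists>s\<in>S. absv (x - s) < e}"

text \<open>Degree of the place infinity: residue field of K at infinity has q^d elements.\<close>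
definition residue_field_inf :: "('c::field \<Rightarrow> real) \<Rightarrow> 'c set \<Rightarrow> 'c set set" where
  "residue_field_inf absv K =
     {x\<in>K. absv x \<le> 1} // {(x, y). x \<in> K \<and> y \<in> K \<and> absv x \<le> 1 \<and> absv y \<le> 1 \<and> absv (x - y) < 1}"

text \<open>The standing setting: absv is a nonarchimedean absolute value on C; C is complete
  and algebraically closed, and the algebraic closure of K_infinity (closure of K) is dense
  in C, i.e. C = C_infinity; F = F_q is the exact constant field of the global function field
  K; the restriction of absv to K is the place infinity of degree d; pi in K is a uniformizer
  with |pi|^{-1} = q^d; rho x = pi^x for rational x is a compatible system of roots.\<close>
definition drinfeld_setting ::
  "('c::field \<Rightarrow> real) \<Rightarrow> 'c set \<Rightarrow> 'c set \<Rightarrow> nat \<Rightarrow> nat \<Rightarrow> 'c \<Rightarrow> (rat \<Rightarrow> 'c) \<Rightarrow> bool" where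
  "drinfeld_setting absv F K q d \<pi> \<rho> \<longleftrightarrow>
     abs_value_on UNIV absv \<and> (\<forall>x y. absv (x + y) \<le> max (absv x) (absv y))
     \<and> (\<forall>X::nat \<Rightarrow> 'c. (\<forall>e>0. \<exists>N. \<forall>m\<ge>N. \<forall>n\<ge>N. absv (X m - X n) < e)
            \<longrightarrow> (\<exists>L. (\<lambda>n. absv (X n - L)) \<longlonglongrightarrow> 0))
     \<and> (\<forall>p::'c poly. degree p \<ge> 1 \<longrightarrow> (\<exists>x. poly p x = 0))
     \<and> closure_abs absv {x. algebraic_over (closure_abs absv K) x} = UNIV
     \<and> global_function_field F K \<and> card F = q
     \<and> nontrivial_on K absv
     \<and> d \<ge> 1 \<and> card (residue_field_inf absv K) = q ^ d
     \<and> \<pi> \<in> K \<and> absv \<pi> < 1 \<and> (\<forall>x\<in>K. absv x < 1 \<longrightarrow> absv x \<le> absv \<pi>)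
     \<and> absv \<pi> = real q powr (- real d)
     \<and> \<rho> 1 = \<pi> \<and> (\<forall>a b. \<rho> (a + b) = \<rho> a * \<rho> b)"

definition roots_of_unity :: "'c::field set" where
  "roots_of_unity = {z. \<exists>n>0. z ^ n = 1}"

definition logq :: "('c::field \<Rightarrow> real) \<Rightarrow> nat \<Rightarrow> 'c \<Rightarrow> real" where
  "logq absv q x = log (real q) (absv x)"

definition sgn1 :: "('c::field \<Rightarrow> real) \<Rightarrow> 'c \<Rightarrow> 'c" where
  "sgn1 absv z = (THE \<zeta>. \<zeta> \<in> roots_of_unity \<and> absv (z / \<zeta> - 1) < 1)"

definition sgnC :: "('c::field \<Rightarrow> real) \<Rightarrow> nat \<Rightarrow> nat \<Rightarrow> (rat \<Rightarrow> 'c) \<Rightarrow> 'c \<Rightarrow> 'c" where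
  "sgnC absv q d \<rho> z =
     sgn1 absv (z * \<rho> (THE a. of_rat a = logq absv q z / real d))"

definition A_lin_indep :: "'c::field set \<Rightarrow> 'c set \<Rightarrow> bool" where
  "A_lin_indep A S \<longleftrightarrow> (\<forall>a. (\<forall>s\<in>S. a s \<in> A) \<and> (\<Sum>s\<in>S. a s * s) = 0 \<longrightarrow> (\<forall>s\<in>S. a s = 0))"

definition A_lattice :: "('c::field \<Rightarrow> real) \<Rightarrow> 'c set \<Rightarrow> nat \<Rightarrow> 'c set \<Rightarrow> bool" where
  "A_lattice absv A r L \<longleftrightarrow>
     \<comment> \<open>A-submodule\<close>
     0 \<in> L \<and> (\<forall>x\<in>L. \<forall>y\<in>L. x + y \<in> L) \<and> (\<forall>a\<in>A. \<forall>x\<in>L. a * x \<in> L)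
     \<comment> \<open>finitely generated\<close>
     \<and> (\<exists>G. finite G \<and> G \<subseteq> L \<and> L = {\<Sum>g\<in>G. a g * g | a. \<forall>g\<in>G. a g \<in> A})
     \<comment> \<open>discrete\<close>
     \<and> (\<exists>e>0. \<forall>x\<in>L. absv x < e \<longrightarrow> x = 0)
     \<comment> \<open>rank r: maximal number of A-linearly independent elements\<close>
     \<and> (\<exists>S. finite S \<and> S \<subseteq> L \<and> card S = r \<and> A_lin_indep A S)
     \<and> (\<forall>S. finite S \<and> S \<subseteq> L \<and> A_lin_indep A S \<longrightarrow> card S \<le> r)"

inductive_set gen_subgroup :: "'c::field set \<Rightarrow> 'c set" for X where
  one: "1 \<in> gen_subgroup X"
| gen: "x \<in> X \<Longrightarrow> x \<in> gen_subgroup X"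
| mult: "x \<in> gen_subgroup X \<Longrightarrow> y \<in> gen_subgroup X \<Longrightarrow> x * y \<in> gen_subgroup X"
| inv: "x \<in> gen_subgroup X \<Longrightarrow> inverse x \<in> gen_subgroup X"

end

theory Submission
  imports Defs "HOL-Library.FuncSet" "HOL-Computational_Algebra.Primes"
begin

locale ds =
  fixes absv :: "'c::field \<Rightarrow> real" and F K :: "'c set" and q d :: nat
    and \<pi> :: 'c and \<rho> :: "rat \<Rightarrow> 'c"
  assumes DS: "drinfeld_setting absv F K q d \<pi> \<rho>"
begin

lemma av: "abs_value_on UNIV absv" using DS unfolding drinfeld_setting_def by blast
lemma ultra: "absv (x + y) \<le> max (absv x) (absv y)" using DS unfolding drinfeld_setting_def by blast
lemma algc: "degree (p::'c poly) \<ge> 1 \<Longrightarrow> \<exists>x. poly p x = 0" using DS unfolding drinfeld_setting_def by blast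
lemma dense: "closure_abs absv {x. algebraic_over (closure_abs absv K) x} = UNIV"
  using DS unfolding drinfeld_setting_def by blast
lemma gff: "global_function_field F K" using DS unfolding drinfeld_setting_def by blast
lemma cardF: "card F = q" using DS unfolding drinfeld_setting_def by blast
lemma d1: "d \<ge> 1" using DS unfolding drinfeld_setting_def by blast
lemma cardres: "card (residue_field_inf absv K) = q ^ d" using DS unfolding drinfeld_setting_def by blast
lemma piK: "\<pi> \<in> K" using DS unfolding drinfeld_setting_def by blast
lemma pimax: "x \<in> K \<Longrightarrow> absv x < 1 \<Longrightarrow> absv x \<le> absv \<pi>" using DS unfolding drinfeld_setting_def by blast
lemma piabs: "absv \<pi> = real q powr (- real d)" using DS unfolding drinfeld_setting_def by blast
lemma rho1: "\<rho> 1 = \<pi>" using DS unfolding drinfeld_setting_def by blast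
lemma rhoadd: "\<rho> (a + b) = \<rho> a * \<rho> b" using DS unfolding drinfeld_setting_def by blast

lemma Fsub: "is_subfield F" and Ffin: "finite F" and Ksub: "is_subfield K" and FK: "F \<subseteq> K"
  using gff unfolding global_function_field_def by blast+

lemma nonneg[simp]: "absv x \<ge> 0" using av unfolding abs_value_on_def by blast
lemma zero_iff[simp]: "absv x = 0 \<longleftrightarrow> x = 0" using av unfolding abs_value_on_def by blast
lemma pos_iff: "absv x > 0 \<longleftrightarrow> x \<noteq> 0" using nonneg[of x] zero_iff[of x] by linarith
lemma mult: "absv (x * y) = absv x * absv y" using av unfolding abs_value_on_def by blast
lemma one[simp]: "absv 1 = 1"
proof -
  have "absv 1 = absv 1 * absv 1" using mult[of 1 1] by simp
  moreover have "absv 1 \<noteq> 0" by simp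
  ultimately show ?thesis by (metis mult_cancel_left1)
qed
lemma zero[simp]: "absv 0 = 0" by simp
lemma minus[simp]: "absv (- x) = absv x"
proof -
  have "absv (-1) * absv (-1) = 1" using mult[of "-1" "-1"] by simp
  hence "absv (-1) = 1" using nonneg[of "-1"]
    by (metis abs_of_nonneg power2_eq_square real_sqrt_abs real_sqrt_one)
  thus ?thesis using mult[of "-1" x] by simp
qed
lemma commute: "absv (x - y) = absv (y - x)" by (metis minus minus_diff_eq)
lemma ultra_diff: "absv (x - y) \<le> max (absv x) (absv y)"
  using ultra[of x "-y"] by simp
lemma strict: assumes "absv x \<noteq> absv y" shows "absv (x + y) = max (absv x) (absv y)"
proof -
  have a: "absv (x+y) \<le> max (absv x) (absv y)" by (rule ultra)
  have b: "absv x \<le> max (absv (x+y)) (absv y)" using ultra[of "x+y" "-y"] by simp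
  have c: "absv y \<le> max (absv (x+y)) (absv x)" using ultra[of "x+y" "-x"] by simp
  show ?thesis using a b c assms by linarith
qed
lemma strict_lt: "absv y < absv x \<Longrightarrow> absv (x + y) = absv x"
  using strict[of x y] by simp
lemma inv: "absv (inverse x) = inverse (absv x)"
proof (cases "x = 0")
  case False
  hence "absv x * absv (inverse x) = 1" using mult[of x "inverse x"] by simp
  thus ?thesis by (metis inverse_unique)
qed simp
lemma divide: "absv (x / y) = absv x / absv y"
  by (simp add: divide_inverse mult inv)
lemma pow: "absv (x ^ n) = absv x ^ n"
  by (induction n) (simp_all add: mult)
lemma powi: "absv (x powi k) = absv x powi k"
  by (simp add: power_int_def pow inv power_inverse)

lemma close_trans: "absv (x - y) < e \<Longrightarrow> absv (y - z) < e \<Longrightarrow> absv (x - z) < e"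
  using ultra[of "x - y" "y - z"] by simp

lemma sum_le: assumes "\<And>i. i \<in> I \<Longrightarrow> absv (f i) \<le> b" "b \<ge> 0"
  shows "absv (sum f I) \<le> b"
  using assms
proof (induction I rule: infinite_finite_induct)
  case (insert x F)
  have "absv (f x) \<le> b" "absv (sum f F) \<le> b" using insert by auto
  hence "max (absv (f x)) (absv (sum f F)) \<le> b" by simp
  thus ?case using ultra[of "f x" "sum f F"] insert(1,2) by (simp add: max_def split: if_splits)
qed auto

lemma sum_lt: assumes "\<And>i. i \<in> I \<Longrightarrow> absv (f i) < b" "b > 0"
  shows "absv (sum f I) < b"
  using assms
proof (induction I rule: infinite_finite_induct)
  case (insert x F)
  have "absv (f x) < b" "absv (sum f F) < b" using insert by auto
  hence "max (absv (f x)) (absv (sum f F)) < b" by simp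
  thus ?case using ultra[of "f x" "sum f F"] insert(1,2) by (simp add: max_def split: if_splits)
qed auto

lemma sum_distinct:
  assumes "finite I" "I \<noteq> {}" "\<And>i. i \<in> I \<Longrightarrow> t i \<noteq> 0" "inj_on (\<lambda>i. absv (t i)) I"
  shows "absv (sum t I) = Max ((\<lambda>i. absv (t i)) ` I)"
  using assms
proof (induction I rule: finite_ne_induct)
  case (singleton x) thus ?case by simp
next
  case (insert x I)
  have IH: "absv (sum t I) = Max ((\<lambda>i. absv (t i)) ` I)"
    using insert by (auto intro: inj_on_subset)
  have "Max ((\<lambda>i. absv (t i)) ` I) \<in> (\<lambda>i. absv (t i)) ` I"
    by (rule Max_in) (use insert in auto)
  then obtain i where i: "i \<in> I" "Max ((\<lambda>i. absv (t i)) ` I) = absv (t i)" by auto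
  have "absv (t x) \<noteq> absv (t i)" using insert.prems(2) i \<open>x \<notin> I\<close> unfolding inj_on_def by force
  hence "absv (t x + sum t I) = max (absv (t x)) (absv (sum t I))" using IH i by (intro strict) auto
  thus ?case using insert IH by simp
qed

end

context ds begin

lemma subf: assumes "is_subfield S"
  shows "0 \<in> S" "1 \<in> S" "x \<in> S \<Longrightarrow> y \<in> S \<Longrightarrow> x + y \<in> S" "x \<in> S \<Longrightarrow> y \<in> S \<Longrightarrow> x * y \<in> S"
    "x \<in> S \<Longrightarrow> - x \<in> S" "x \<in> S \<Longrightarrow> inverse x \<in> S"
  using assms unfolding is_subfield_def by blast+

lemma subf_diff: "is_subfield S \<Longrightarrow> x \<in> S \<Longrightarrow> y \<in> S \<Longrightarrow> x - y \<in> S"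
  using subf[of S] by (metis diff_conv_add_uminus)
lemma subf_div: "is_subfield S \<Longrightarrow> x \<in> S \<Longrightarrow> y \<in> S \<Longrightarrow> x / y \<in> S"
  using subf[of S] by (metis divide_inverse)
lemma subf_pow: "is_subfield S \<Longrightarrow> x \<in> S \<Longrightarrow> x ^ n \<in> S"
  using subf[of S] by (induction n) auto
lemma subf_powi: "is_subfield S \<Longrightarrow> x \<in> S \<Longrightarrow> x powi k \<in> S"
  using subf[of S] subf_pow[of S] by (simp add: power_int_def)
lemma subf_sum: "is_subfield S \<Longrightarrow> (\<And>i. i \<in> I \<Longrightarrow> f i \<in> S) \<Longrightarrow> sum f I \<in> S"
  using subf[of S] by (induction I rule: infinite_finite_induct) auto
lemma subf_nat: "is_subfield S \<Longrightarrow> of_nat n \<in> S"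
  using subf[of S] by (induction n) auto

lemma q2: "q \<ge> 2"
proof -
  have "{0,1} \<subseteq> F" using subf[OF Fsub] by auto
  hence "card {0::'c,1} \<le> card F" using Ffin by (intro card_mono) auto
  thus ?thesis using cardF by simp
qed

lemma q1: "real q > 1" using q2 by simp

lemma piabs': "absv \<pi> = real q powr (- real d)" by (rule piabs)

lemma pi_nz: "\<pi> \<noteq> 0" using piabs q1 by (metis powr_gt_zero zero zero_less_one less_trans less_irrefl)

lemma abs_pipowi: "absv (\<pi> powi e) = real q powr (- real d * of_int e)"
proof -
  have "absv (\<pi> powi e) = (real q powr (- real d)) powi e" by (simp add: powi piabs)
  also have "\<dots> = (real q powr (- real d)) powr (of_int e)"
    using q1 by (subst powr_real_of_int') auto
  also have "\<dots> = real q powr (- real d * of_int e)" by (simp add: powr_powr)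
  finally show ?thesis .
qed

lemma F_abs: assumes "x \<in> F" "x \<noteq> 0" shows "absv x = 1"
proof -
  have "range (\<lambda>k::nat. x ^ k) \<subseteq> F" using subf_pow[OF Fsub] assms by auto
  hence "finite (range (\<lambda>k::nat. x ^ k))" using Ffin finite_subset by blast
  hence "\<not> inj (\<lambda>k::nat. x ^ k)" using finite_imageD by blast
  then obtain i j :: nat where ij: "i \<noteq> j" "x ^ i = x ^ j" unfolding inj_on_def by blast
  hence e: "absv x ^ i = absv x ^ j" by (metis pow)
  have p: "absv x > 0" using assms pos_iff by blast
  show ?thesis
  proof (rule ccontr)
    assume ne: "absv x \<noteq> 1"
    show False
    proof (cases "absv x > 1")
      case True thus False using e ij power_inject_exp by blast
    next
      case False
      hence "inverse (absv x) > 1" using ne p by (simp add: one_less_inverse_iff)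
      moreover have "inverse (absv x) ^ i = inverse (absv x) ^ j" using e by (simp add: power_inverse)
      ultimately show False using ij power_inject_exp by blast
    qed
  qed
qed

end

context ds begin
lemma Kval: assumes "x \<in> K" "x \<noteq> 0" shows "\<exists>e::int. absv x = real q powr (real d * of_int e)"
proof -
  have xp: "absv x > 0" using assms pos_iff by blast
  define e where "e = \<lfloor>log (real q) (absv x) / real d\<rfloor>"
  have dpos: "real d > 0" using d1 by simp
  have le: "real d * of_int e \<le> log (real q) (absv x)" 
  proof -
    have "of_int e \<le> log (real q) (absv x) / real d" unfolding e_def by (rule of_int_floor_le)
    thus ?thesis using dpos by (simp add: field_simps)
  qed
  have lt: "log (real q) (absv x) < real d * (of_int e + 1)"
  proof -
    have "log (real q) (absv x) / real d < of_int e + 1" unfolding e_def by (rule real_of_int_floor_add_one_gt)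
    thus ?thesis using dpos by (simp add: field_simps)
  qed
  define u where "u = x * \<pi> powi e"
  have uK: "u \<in> K" unfolding u_def by (rule subf(4)[OF Ksub assms(1) subf_powi[OF Ksub piK]])
  have xq: "absv x = real q powr log (real q) (absv x)" using q1 xp by (simp add: powr_log_cancel)
  have au: "absv u = real q powr (log (real q) (absv x) - real d * of_int e)"
  proof -
    have "absv u = absv x * real q powr (- real d * of_int e)" unfolding u_def mult abs_pipowi ..
    also have "\<dots> = real q powr (log (real q) (absv x)) * real q powr (- real d * of_int e)"
      using xq by simp
    also have "\<dots> = real q powr (log (real q) (absv x) - real d * of_int e)"
      by (simp add: powr_add[symmetric])
    finally show ?thesis .
  qed
  have u1: "absv u \<ge> 1" unfolding au using le q1 by (intro ge_one_powr_ge_zero) auto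
  have u2: "absv u < real q powr real d" unfolding au using lt q1 by (intro powr_less_mono) (auto simp: algebra_simps)
  have iK: "inverse u \<in> K" by (rule subf(6)[OF Ksub uK])
  have ai: "absv (inverse u) = inverse (absv u)" by (rule inv)
  have "absv (inverse u) > real q powr (- real d)"
  proof -
    have "inverse (real q powr real d) < inverse (absv u)"
      using u2 u1 by (intro less_imp_inverse_less) auto
    thus ?thesis unfolding ai by (simp add: powr_minus)
  qed
  hence "\<not> absv (inverse u) < 1" using pimax[OF iK] piabs by linarith
  hence "inverse (absv u) \<ge> 1" unfolding ai by simp
  hence "absv u \<le> 1" using u1 by (simp add: one_le_inverse_iff)
  hence "absv u = 1" using u1 by simp
  hence "real q powr (log (real q) (absv x) - real d * of_int e) = real q powr 0" unfolding au using q2 by simp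
  hence "log (real q) (absv x) - real d * of_int e = 0" using q1 powr_inj[of "real q" "log (real q) (absv x) - real d * of_int e" 0] by simp
  hence "log (real q) (absv x) = real d * of_int e" by simp
  thus ?thesis using xq by (intro exI[of _ e]) simp
qed
end

context ds begin

lemma Kcl: "K \<subseteq> closure_abs absv K"
  unfolding closure_abs_def by (auto intro!: bexI)

lemma Clval: assumes "y \<in> closure_abs absv K" "y \<noteq> 0"
  shows "\<exists>e::int. absv y = real q powr (real d * of_int e)"
proof -
  have "absv y > 0" using assms pos_iff by blast
  then obtain s where s: "s \<in> K" "absv (y - s) < absv y" using assms(1) unfolding closure_abs_def by blast
  have "absv (s - y) < absv y" using s commute by simp
  hence "absv (y + (s - y)) = absv y" by (rule strict_lt)
  hence eq: "absv s = absv y" by simp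
  hence "s \<noteq> 0" using assms by auto
  thus ?thesis using Kval[OF s(1)] eq by auto
qed

lemma Algval_aux:
  assumes "j < i" "absv (a * z ^ i) = absv (b * z ^ j)" "z \<noteq> 0"
    "absv a = real q powr (real d * of_int ea)" "absv b = real q powr (real d * of_int eb)"
  shows "absv z ^ (i - j) = real q powr (real d * of_int (eb - ea))"
proof -
  have zi: "absv z ^ i = absv z ^ j * absv z ^ (i - j)" using assms(1) by (simp add: power_add[symmetric])
  have zj: "absv z ^ j > 0" using assms(3) pos_iff by simp
  have "real q powr (real d * of_int ea) * (absv z ^ j * absv z ^ (i - j)) = real q powr (real d * of_int eb) * absv z ^ j"
    using assms(2) unfolding mult pow assms(4,5) zi by simp
  hence "real q powr (real d * of_int ea) * absv z ^ (i - j) = real q powr (real d * of_int eb)"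
    using zj assms(3) by (simp add: algebra_simps)
  moreover have "real q powr (real d * of_int ea) > 0" using q1 by simp
  ultimately have "absv z ^ (i - j) = real q powr (real d * of_int eb) / real q powr (real d * of_int ea)"
    by (simp add: eq_divide_eq mult.commute)
  also have "\<dots> = real q powr (real d * of_int (eb - ea))"
    by (simp add: powr_diff[symmetric] algebra_simps)
  finally show ?thesis .
qed

lemma Algval: assumes "algebraic_over (closure_abs absv K) z" "z \<noteq> 0"
  shows "\<exists>(m::int) (n::nat). n > 0 \<and> absv z ^ n = real q powr (real d * of_int m)"
proof -
  obtain p where p: "p \<noteq> 0" "set (coeffs p) \<subseteq> closure_abs absv K" "poly p z = 0"
    using assms(1) unfolding algebraic_over_def by blast
  define I where "I = {i. i \<le> degree p \<and> coeff p i \<noteq> 0}"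
  have fI: "finite I" unfolding I_def by auto
  have neI: "I \<noteq> {}" unfolding I_def using p(1) by (auto intro!: exI[of _ "degree p"])
  have cI: "\<And>i. i \<in> I \<Longrightarrow> \<exists>e::int. absv (coeff p i) = real q powr (real d * of_int e)"
  proof -
    fix i assume "i \<in> I"
    hence "coeff p i \<in> closure_abs absv K" "coeff p i \<noteq> 0"
      using coeff_in_coeffs[OF p(1), of i] p(2) unfolding I_def by auto
    thus "\<exists>e::int. absv (coeff p i) = real q powr (real d * of_int e)" by (rule Clval)
  qed
  have "poly p z = (\<Sum>i\<le>degree p. coeff p i * z ^ i)" by (rule poly_altdef)
  also have "\<dots> = (\<Sum>i\<in>I. coeff p i * z ^ i)"
    by (rule sum.mono_neutral_right) (auto simp: I_def)
  finally have s0: "(\<Sum>i\<in>I. coeff p i * z ^ i) = 0" using p(3) by simp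
  have "\<not> inj_on (\<lambda>i. absv (coeff p i * z ^ i)) I"
  proof
    assume inj: "inj_on (\<lambda>i. absv (coeff p i * z ^ i)) I"
    have nz: "\<And>i. i \<in> I \<Longrightarrow> coeff p i * z ^ i \<noteq> 0" using assms(2) unfolding I_def by auto
    have "absv (\<Sum>i\<in>I. coeff p i * z ^ i) = Max ((\<lambda>i. absv (coeff p i * z ^ i)) ` I)"
      by (rule sum_distinct[OF fI neI nz inj])
    also have "\<dots> \<in> (\<lambda>i. absv (coeff p i * z ^ i)) ` I" by (rule Max_in) (use fI neI in auto)
    finally obtain i where i: "i \<in> I" "absv (\<Sum>i\<in>I. coeff p i * z ^ i) = absv (coeff p i * z ^ i)" by blast
    hence "absv (coeff p i * z ^ i) = 0" using s0 by simp
    hence "coeff p i * z ^ i = 0" by (simp only: zero_iff)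
    thus False using nz[OF i(1)] by blast
  qed
  then obtain i j where ij: "i \<in> I" "j \<in> I" "i \<noteq> j" "absv (coeff p i * z ^ i) = absv (coeff p j * z ^ j)"
    unfolding inj_on_def by blast
  obtain ei where ei: "absv (coeff p i) = real q powr (real d * of_int ei)" using cI ij by blast
  obtain ej where ej: "absv (coeff p j) = real q powr (real d * of_int ej)" using cI ij by blast
  show ?thesis
  proof (cases "j < i")
    case True
    show ?thesis using Algval_aux[OF True ij(4) assms(2) ei ej] True by (intro exI[of _ "ej - ei"] exI[of _ "i - j"]) auto
  next
    case False
    hence "i < j" using ij by auto
    thus ?thesis using Algval_aux[OF \<open>i < j\<close> ij(4)[symmetric] assms(2) ej ei] by (intro exI[of _ "ei - ej"] exI[of _ "j - i"]) auto
  qed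
qed

lemma Zval: assumes "z \<noteq> 0"
  shows "\<exists>(m::int) (n::nat). n > 0 \<and> absv z ^ n = real q powr (real d * of_int m)"
proof -
  have "absv z > 0" using assms pos_iff by blast
  moreover have "z \<in> closure_abs absv {x. algebraic_over (closure_abs absv K) x}" using dense by simp
  ultimately obtain s where s: "algebraic_over (closure_abs absv K) s" "absv (z - s) < absv z"
    unfolding closure_abs_def by blast
  have "absv (s - z) < absv z" using s commute by simp
  hence "absv (z + (s - z)) = absv z" by (rule strict_lt)
  hence eq: "absv s = absv z" by simp
  hence "s \<noteq> 0" using assms by auto
  thus ?thesis using Algval[OF s(1)] eq by auto
qed

lemma eq_pow_base: assumes "(x::real) ^ n = y ^ n" "n > 0" "x \<ge> 0" "y \<ge> 0" shows "x = y"
  using power_eq_imp_eq_norm[OF assms(1,2)] assms(3,4) by simp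

lemma Zrat: assumes "z \<noteq> 0" shows "\<exists>a::rat. absv z = real q powr (real d * of_rat a)"
proof -
  obtain m and n :: nat where mn: "n > 0" "absv z ^ n = real q powr (real d * of_int m)" using Zval[OF assms] by blast
  define a where "a = (of_int m / of_nat n :: rat)"
  have ar: "(of_rat a :: real) = of_int m / of_nat n" unfolding a_def by (simp add: of_rat_divide)
  have qz: "real q \<noteq> 0" using q1 by linarith
  have "(real q powr (real d * of_rat a)) ^ n = real q powr (of_nat n * (real d * of_rat a))"
    by (rule powr_power[OF qz])
  also have "of_nat n * (real d * of_rat a) = real d * of_int m" unfolding ar using mn(1) by (simp add: field_simps)
  finally have e: "(real q powr (real d * of_rat a)) ^ n = absv z ^ n" using mn(2) by simp
  have "absv z = real q powr (real d * of_rat a)"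
  proof (rule eq_pow_base[OF _ mn(1)])
    show "absv z ^ n = (real q powr (real d * of_rat a)) ^ n" using e by simp
  qed simp_all
  thus ?thesis by blast
qed

end

context ds begin
lemma rho0: "\<rho> 0 = 1"
proof -
  have "\<rho> 1 = \<rho> 1 * \<rho> 0" using rhoadd[of 1 0] by simp
  thus ?thesis using rho1 pi_nz by simp
qed
lemma rho_neg: "\<rho> (- a) * \<rho> a = 1" using rhoadd[of "-a" a] rho0 by simp
lemma rho_nz: "\<rho> a \<noteq> 0" using rho_neg[of a] by auto
lemma rho_neg': "\<rho> (- a) = inverse (\<rho> a)" using rho_neg[of a] rho_nz[of a] by (simp add: field_simps)
lemma rho_nat: "\<rho> (of_nat n) = \<pi> ^ n"
  by (induction n) (simp_all add: rho0 rhoadd rho1 algebra_simps)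
lemma rho_int: "\<rho> (of_int k) = \<pi> powi k"
proof (cases "k \<ge> 0")
  case True
  then obtain n where "k = int n" by (metis nonneg_eq_int)
  thus ?thesis by (simp add: rho_nat power_int_def)
next
  case False
  then obtain n where "k = - int n" by (metis nonpos_int_cases linorder_not_le order_less_imp_le)
  thus ?thesis using rho_neg'[of "of_nat n"] by (simp add: rho_nat power_int_def power_inverse)
qed
lemma rho_multn: "\<rho> (of_nat s * a) = \<rho> a ^ s"
  by (induction s) (simp_all add: rho0 rhoadd algebra_simps)

lemma abs_rho: "absv (\<rho> a) = real q powr (- real d * of_rat a)"
proof -
  obtain r s where rs: "quotient_of a = (r, s)" by (cases "quotient_of a") auto
  have sp: "s > 0" using quotient_of_denom_pos[OF rs] .
  have a: "a = of_int r / of_int s" using quotient_of_div[OF rs] .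
  define n where "n = nat s"
  have np: "n > 0" using sp n_def by simp
  have sn: "of_int s = (of_nat n :: rat)" using sp n_def by simp
  have "of_nat n * a = of_int r" using a sn sp by (simp add: field_simps)
  hence "\<rho> a ^ n = \<pi> powi r" using rho_multn[of n a] rho_int[of r] by simp
  hence e1: "absv (\<rho> a) ^ n = real q powr (- real d * of_int r)" by (metis pow abs_pipowi)
  have ar: "of_rat a = (of_int r / of_nat n :: real)" using a sn by (simp add: of_rat_divide)
  have qz: "real q \<noteq> 0" using q1 by linarith
  have "(real q powr (- real d * of_rat a)) ^ n = real q powr (of_nat n * (- real d * of_rat a))"
    by (rule powr_power[OF qz])
  also have "of_nat n * (- real d * of_rat a) = - real d * of_int r" unfolding ar using np by (simp add: field_simps)
  finally have e2: "(real q powr (- real d * of_rat a)) ^ n = real q powr (- real d * of_int r)" .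
  show ?thesis
  proof (rule eq_pow_base[OF _ np])
    show "absv (\<rho> a) ^ n = (real q powr (- real d * of_rat a)) ^ n" using e1 e2 by simp
  qed simp_all
qed

lemma norm1: assumes "absv z = real q powr (real d * of_rat a)" shows "absv (z * \<rho> a) = 1"
  using assms q1 by (simp add: mult abs_rho powr_add[symmetric])

definition Az :: "'c \<Rightarrow> rat" where "Az z = (THE a. of_rat a = logq absv q z / real d)"

lemma Az_eq: assumes "absv z = real q powr (real d * of_rat a)" shows "Az z = a"
proof -
  have "logq absv q z = real d * of_rat a" unfolding logq_def assms using q1 log_powr_cancel[of "real q" "real d * of_rat a"] by simp
  hence h: "logq absv q z / real d = of_rat a" using d1 by simp
  show ?thesis unfolding Az_def
  proof (rule the_equality)
    show "of_rat a = logq absv q z / real d" using h by simp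
    fix b assume "(of_rat b :: real) = logq absv q z / real d"
    hence "(of_rat b :: real) = of_rat a" using h by simp
    thus "b = a" by (simp only: of_rat_eq_iff)
  qed
qed

lemma Az_prop: assumes "z \<noteq> 0" shows "absv z = real q powr (real d * of_rat (Az z))" "absv (z * \<rho> (Az z)) = 1"
proof -
  obtain a where a: "absv z = real q powr (real d * of_rat a)" using Zrat[OF assms] by blast
  show "absv z = real q powr (real d * of_rat (Az z))" using a Az_eq[OF a] by simp
  thus "absv (z * \<rho> (Az z)) = 1" by (rule norm1)
qed

lemma sgnC_def': "sgnC absv q d \<rho> z = sgn1 absv (z * \<rho> (Az z))"
  unfolding sgnC_def Az_def ..

end

context ds begin

lemma root_abs: assumes "z \<in> roots_of_unity" shows "absv z = 1"
proof -
  obtain n where n: "n > 0" "z ^ n = 1" using assms unfolding roots_of_unity_def by blast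
  have "absv z ^ n = 1 ^ n" using n pow[of z n] by simp
  thus ?thesis by (rule eq_pow_base[OF _ n(1)]) simp_all
qed

lemma root_nz: "(z::'c) \<in> roots_of_unity \<Longrightarrow> z \<noteq> 0"
proof
  assume "z \<in> roots_of_unity" "z = 0"
  thus False using root_abs[of z] by simp
qed

lemma root_mult: assumes "z \<in> roots_of_unity" "w \<in> roots_of_unity" shows "z * w \<in> roots_of_unity"
proof -
  obtain n where n: "n > 0" "z ^ n = 1" using assms unfolding roots_of_unity_def by blast
  obtain m where m: "m > 0" "w ^ m = 1" using assms unfolding roots_of_unity_def by blast
  have "(z * w) ^ (n * m) = (z ^ n) ^ m * (w ^ m) ^ n"
    by (simp add: power_mult_distrib power_mult[symmetric] mult.commute)
  hence "(z * w) ^ (n * m) = 1" using n m by simp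
  thus ?thesis unfolding roots_of_unity_def using n m by (intro CollectI exI[of _ "n*m"]) auto
qed

lemma root_inv: assumes "z \<in> roots_of_unity" shows "inverse z \<in> roots_of_unity"
proof -
  obtain n where n: "n > 0" "z ^ n = 1" using assms unfolding roots_of_unity_def by blast
  have "inverse z ^ n = 1" using n by (simp add: power_inverse)
  thus ?thesis unfolding roots_of_unity_def using n by blast
qed

lemma charpos: "CHAR('c) > 0"
proof -
  have "range (\<lambda>k::nat. (of_nat k :: 'c)) \<subseteq> F" using subf_nat[OF Fsub] by auto
  hence "finite (range (\<lambda>k::nat. (of_nat k :: 'c)))" using Ffin finite_subset by blast
  hence "\<not> inj (\<lambda>k::nat. (of_nat k :: 'c))" using finite_imageD by blast
  then obtain i j :: nat where ij: "i < j" "(of_nat i :: 'c) = of_nat j"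
    unfolding inj_on_def by (metis UNIV_I linorder_neqE_nat)
  hence "(of_nat (j - i) :: 'c) = 0" by (simp add: of_nat_diff)
  thus ?thesis using ij(1) CHAR_pos_iff[where 'a='c] by (metis zero_less_diff)
qed

lemma charprime: "prime CHAR('c)" using charpos prime_CHAR_semidom by blast

lemma decomp: assumes "prime (p::nat)" shows "n > 0 \<Longrightarrow> \<exists>k m. n = p ^ k * m \<and> \<not> p dvd m"
proof (induction n rule: less_induct)
  case (less n)
  show ?case
  proof (cases "p dvd n")
    case True
    then obtain n' where n': "n = p * n'" by blast
    have p1: "p > 1" using assms prime_gt_1_nat by blast
    have "n' > 0" using less.prems n' by (cases n') auto
    moreover have "n' < n" using n' p1 \<open>n' > 0\<close> by simp
    ultimately obtain k m where "n' = p ^ k * m" "\<not> p dvd m" using less.IH by blast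
    thus ?thesis using n' by (intro exI[of _ "Suc k"] exI[of _ m]) simp
  next
    case False thus ?thesis by (intro exI[of _ 0] exI[of _ n]) simp
  qed
qed

lemma pow_close: assumes "absv (x - 1) < 1" shows "absv (x ^ j - 1) < 1"
proof (induction j)
  case 0 thus ?case by simp
next
  case (Suc j)
  have x1: "absv x = 1"
  proof -
    have "absv (1 + (x - 1)) = absv 1" by (rule strict_lt) (use assms in simp)
    thus ?thesis by simp
  qed
  have "x ^ Suc j - 1 = x * (x ^ j - 1) + (x - 1)" by (simp add: algebra_simps)
  hence "absv (x ^ Suc j - 1) \<le> max (absv (x * (x ^ j - 1))) (absv (x - 1))" using ultra by metis
  moreover have "absv (x * (x ^ j - 1)) < 1" using Suc x1 by (simp add: mult)
  ultimately show ?case using assms by linarith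
qed

lemma uniq1: assumes "\<eta> \<in> roots_of_unity" "absv (\<eta> - 1) < 1" shows "\<eta> = 1"
proof -
  obtain n where n: "n > 0" "\<eta> ^ n = 1" using assms unfolding roots_of_unity_def by blast
  define p where "p = CHAR('c)"
  have pp: "prime p" unfolding p_def by (rule charprime)
  obtain k m where km: "n = p ^ k * m" "\<not> p dvd m" using decomp[OF pp n(1)] by blast
  have m0: "m > 0" using km n(1) by (cases m) auto
  define \<epsilon> where "\<epsilon> = \<eta> - 1"
  define \<xi> where "\<xi> = \<eta> ^ (p ^ k)"
  have "\<xi> = (1 + \<epsilon>) ^ (p ^ k)" unfolding \<xi>_def \<epsilon>_def by simp
  also have "\<dots> = 1 ^ (p ^ k) + \<epsilon> ^ (p ^ k)" by (rule freshmans_dream') (auto simp: p_def charprime)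
  finally have xe: "\<xi> - 1 = \<epsilon> ^ (p ^ k)" by simp
  have pk: "p ^ k > 0" using pp prime_gt_0_nat by simp
  have ae: "absv \<epsilon> < 1" unfolding \<epsilon>_def using assms(2) .
  have "absv (\<xi> - 1) = absv \<epsilon> ^ (p ^ k)" unfolding xe pow ..
  also have "\<dots> \<le> absv \<epsilon> ^ 1" using pk ae by (intro power_decreasing) auto
  finally have x1: "absv (\<xi> - 1) < 1" using ae by simp
  have xm: "\<xi> ^ m = 1" unfolding \<xi>_def using n km by (simp add: power_mult)
  have "\<xi> = 1"
  proof (rule ccontr)
    assume ne: "\<xi> \<noteq> 1"
    have "(\<xi> - 1) * (\<Sum>i<m. \<xi> ^ i) = 0" using power_diff_1_eq[of \<xi> m] xm by simp
    hence s0: "(\<Sum>i<m. \<xi> ^ i) = 0" using ne by simp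
    have "(\<Sum>i<m. \<xi> ^ i) - of_nat m = (\<Sum>i<m. \<xi> ^ i - 1)" by (simp add: sum_subtractf)
    hence "absv (- of_nat m) < 1" using s0 sum_lt[of "{..<m}" "\<lambda>i. \<xi> ^ i - 1" 1] pow_close[OF x1] by simp
    hence "absv (of_nat m :: 'c) < 1" by simp
    moreover have "(of_nat m :: 'c) \<noteq> 0" using km(2) of_nat_eq_0_iff_char_dvd[of m, where 'a='c] p_def by simp
    hence "absv (of_nat m :: 'c) = 1" by (rule F_abs[OF subf_nat[OF Fsub]])
    ultimately show False by simp
  qed
  hence "\<epsilon> ^ (p ^ k) = 0" using xe by simp
  hence "\<epsilon> = 0" by simp
  thus ?thesis unfolding \<epsilon>_def by simp
qed

lemma uniq: assumes "z \<in> roots_of_unity" "w \<in> roots_of_unity" "absv (z - w) < 1" shows "z = w"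
proof -
  have wn: "w \<noteq> 0" using root_nz assms by blast
  have "z / w \<in> roots_of_unity" using root_mult[OF assms(1) root_inv[OF assms(2)]] by (simp add: divide_inverse)
  moreover have "absv (z / w - 1) < 1"
  proof -
    have "z / w - 1 = (z - w) / w" using wn by (simp add: field_simps)
    thus ?thesis using assms(3) root_abs[OF assms(2)] by (simp add: divide)
  qed
  ultimately have "z / w = 1" by (rule uniq1)
  thus ?thesis using wn by simp
qed

end

context ds begin

lemma reps: "\<exists>T. finite T \<and> T \<subseteq> K \<and> (\<forall>u\<in>K. absv u \<le> 1 \<longrightarrow> (\<exists>t\<in>T. absv (u - t) < 1))"
proof -
  define Ob where "Ob = {x\<in>K. absv x \<le> 1}"
  define R where "R = {(x, y). x \<in> K \<and> y \<in> K \<and> absv x \<le> 1 \<and> absv y \<le> 1 \<and> absv (x - y) < 1}"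
  have RF: "residue_field_inf absv K = Ob // R" unfolding residue_field_inf_def Ob_def R_def ..
  have "card (Ob // R) > 0" using cardres RF q2 by simp
  hence fin: "finite (Ob // R)" using card_gt_0_iff by blast
  define T where "T = (\<lambda>C. SOME x. x \<in> C) ` (Ob // R)"
  have "finite T" unfolding T_def using fin by simp
  moreover have "T \<subseteq> K"
  proof
    fix t assume "t \<in> T"
    then obtain C where C: "C \<in> Ob // R" "t = (SOME x. x \<in> C)" unfolding T_def by blast
    then obtain u where u: "u \<in> Ob" "C = R `` {u}" unfolding quotient_def by blast
    have "u \<in> C" using u unfolding R_def Ob_def by auto
    hence "t \<in> C" using C someI[of "\<lambda>x. x \<in> C"] by blast
    thus "t \<in> K" using u unfolding R_def by auto
  qed
  moreover have "\<forall>u\<in>K. absv u \<le> 1 \<longrightarrow> (\<exists>t\<in>T. absv (u - t) < 1)"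
  proof (intro ballI impI)
    fix u assume u: "u \<in> K" "absv u \<le> 1"
    hence uO: "u \<in> Ob" unfolding Ob_def by simp
    define C where "C = R `` {u}"
    have C: "C \<in> Ob // R" unfolding C_def using uO by (rule quotientI)
    have "u \<in> C" using u unfolding R_def C_def by auto
    hence "(SOME x. x \<in> C) \<in> C" by (rule someI)
    hence "absv (u - (SOME x. x \<in> C)) < 1" unfolding C_def R_def by auto
    moreover have "(SOME x. x \<in> C) \<in> T" unfolding T_def using C by blast
    ultimately show "\<exists>t\<in>T. absv (u - t) < 1" by blast
  qed
  ultimately show ?thesis by blast
qed

lemma factor: "(p::'c poly) \<noteq> 0 \<Longrightarrow> \<exists>rs. \<forall>x. poly p x = lead_coeff p * prod_list (map (\<lambda>r. x - r) rs)"
proof (induction "degree p" arbitrary: p)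
  case 0
  hence pe: "p = [:coeff p 0:]" using degree_0_id by metis
  have "\<forall>x. poly p x = coeff p 0" by (subst pe) simp
  hence "\<forall>x. poly p x = lead_coeff p" using 0 by simp
  thus ?case by (intro exI[of _ "[]"]) simp
next
  case (Suc n)
  then obtain r where r: "poly p r = 0" using algc[of p] by auto
  then obtain s where s: "p = [:-r, 1:] * s" using poly_eq_0_iff_dvd by (metis dvdE)
  have s0: "s \<noteq> 0" using Suc.prems s by auto
  have "degree ([:-r, 1:] * s) = degree [:-r, 1:] + degree s" by (rule degree_mult_eq) (use s0 in auto)
  hence "degree p = 1 + degree s" using s by simp
  hence ds: "degree s = n" using Suc.hyps(2) by simp
  obtain rs where rs: "\<forall>x. poly s x = lead_coeff s * prod_list (map (\<lambda>r. x - r) rs)" using Suc.hyps(1)[OF ds[symmetric] s0] by blast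
  have "lead_coeff p = lead_coeff [:-r, 1:] * lead_coeff s" unfolding s by (rule lead_coeff_mult)
  hence lc: "lead_coeff p = lead_coeff s" by simp
  have pm: "\<forall>x. poly p x = (x - r) * poly s x" unfolding s by (simp add: algebra_simps)
  show ?case
    by (intro exI[of _ "r # rs"]) (simp add: pm rs lc)
qed

lemma prod_abs: "absv (prod_list xs) = prod_list (map absv xs)"
  by (induction xs) (simp_all add: mult)

lemma prod_ge1: "(\<And>x. x \<in> set xs \<Longrightarrow> (x::real) \<ge> 1) \<Longrightarrow> prod_list xs \<ge> 1"
proof (induction xs)
  case (Cons a xs)
  hence "a \<ge> 1" "prod_list xs \<ge> 1" by auto
  thus ?case using mult_mono[of 1 a 1 "prod_list xs"] by simp
qed simp

lemma near_root: assumes "absv (y ^ N - 1) < 1" "N > 0" shows "\<exists>\<zeta>. \<zeta> ^ N = 1 \<and> absv (y - \<zeta>) < 1"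
proof -
  define p where "p = (monom (1::'c) N + [:-1:])"
  have pe: "\<And>x. poly p x = x ^ N - 1" unfolding p_def by (simp add: poly_monom)
  have dp: "degree p = N" unfolding p_def using assms(2) by (subst degree_add_eq_left) (auto simp: degree_monom_eq)
  have lp: "lead_coeff p = 1" using dp assms(2) unfolding p_def by (cases N) simp_all
  have p0: "p \<noteq> 0" using lp by auto
  obtain rs where rs: "\<forall>x. poly p x = lead_coeff p * prod_list (map (\<lambda>r. x - r) rs)" using factor[OF p0] by blast
  have "\<exists>r\<in>set rs. absv (y - r) < 1"
  proof (rule ccontr)
    assume "\<not> ?thesis"
    hence "prod_list (map absv (map (\<lambda>r. y - r) rs)) \<ge> 1" by (intro prod_ge1) (auto simp: not_less)
    hence "absv (poly p y) \<ge> 1" using rs lp by (simp add: prod_abs)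
    thus False using pe assms(1) by simp
  qed
  then obtain r where r: "r \<in> set rs" "absv (y - r) < 1" by blast
  have "poly p r = 0" using rs r(1) by (simp add: prod_list_zero_iff)
  hence "r ^ N = 1" using pe by simp
  thus ?thesis using r by blast
qed

end

context ds begin

definition Ob where "Ob = {x\<in>K. absv x \<le> 1}"

lemma Ob_add: "x \<in> Ob \<Longrightarrow> y \<in> Ob \<Longrightarrow> x + y \<in> Ob"
  unfolding Ob_def using subf(3)[OF Ksub] ultra[of x y] by (simp add: max_def split: if_splits)
lemma Ob_mult: "x \<in> Ob \<Longrightarrow> y \<in> Ob \<Longrightarrow> x * y \<in> Ob"
  unfolding Ob_def using subf(4)[OF Ksub] by (simp add: mult mult_le_one)

lemma step_rel:
  assumes y1: "absv y = 1" and J: "j0 = Suc J"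
    and cO: "\<And>i. i < j0 \<Longrightarrow> c i \<in> Ob"
    and rel: "absv (y ^ j0 - (\<Sum>i<j0. c i * y ^ i)) < 1"
    and aO: "\<And>i. i < j0 \<Longrightarrow> a i \<in> Ob"
    and ak: "absv (y ^ k - (\<Sum>i<j0. a i * y ^ i)) < 1"
  shows "\<exists>b. (\<forall>i<j0. b i \<in> Ob) \<and> absv (y ^ Suc k - (\<Sum>i<j0. b i * y ^ i)) < 1"
proof -
  define b where "b i = (if i = 0 then 0 else a (i - 1)) + a J * c i" for i
  have bO: "\<forall>i<j0. b i \<in> Ob"
  proof (intro allI impI)
    fix i assume i: "i < j0"
    have "(if i = 0 then 0 else a (i - 1)) \<in> Ob" using aO i unfolding Ob_def
      by (cases i) (auto simp: subf(1)[OF Ksub])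
    moreover have "a J * c i \<in> Ob" using aO cO i J by (intro Ob_mult) auto
    ultimately show "b i \<in> Ob" unfolding b_def by (rule Ob_add)
  qed
  define Sa where "Sa = (\<Sum>i<j0. a i * y ^ i)"
  have ySa: "y * Sa = (\<Sum>i<J. a i * y ^ Suc i) + a J * y ^ j0"
    unfolding Sa_def J by (simp add: sum_distrib_left algebra_simps)
  have Sb: "(\<Sum>i<j0. b i * y ^ i) = (\<Sum>i<J. a i * y ^ Suc i) + a J * (\<Sum>i<j0. c i * y ^ i)"
  proof -
    have "(\<Sum>i<j0. b i * y ^ i) = (\<Sum>i<j0. (if i = 0 then 0 else a (i - 1)) * y ^ i) + (\<Sum>i<j0. a J * c i * y ^ i)"
      unfolding b_def by (simp add: sum.distrib algebra_simps)
    also have "(\<Sum>i<j0. (if i = 0 then 0 else a (i - 1)) * y ^ i) = (\<Sum>i<J. a i * y ^ Suc i)"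
      unfolding J by (subst sum.lessThan_Suc_shift) simp
    also have "(\<Sum>i<j0. a J * c i * y ^ i) = a J * (\<Sum>i<j0. c i * y ^ i)"
      by (simp add: sum_distrib_left algebra_simps)
    finally show ?thesis .
  qed
  have d1: "y * Sa - (\<Sum>i<j0. b i * y ^ i) = a J * (y ^ j0 - (\<Sum>i<j0. c i * y ^ i))"
    unfolding ySa Sb by (simp add: algebra_simps)
  have aJ: "absv (a J) \<le> 1" using aO[of J] J unfolding Ob_def by simp
  have e1: "absv (y * Sa - (\<Sum>i<j0. b i * y ^ i)) < 1"
    unfolding d1 mult using aJ rel mult_left_le_one_le[of "absv (y ^ j0 - (\<Sum>i<j0. c i * y ^ i))" "absv (a J)"] by simp
  have e2: "absv (y ^ Suc k - y * Sa) < 1"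
  proof -
    have "y ^ Suc k - y * Sa = y * (y ^ k - Sa)" by (simp add: algebra_simps)
    thus ?thesis using ak y1 unfolding Sa_def by (simp add: mult)
  qed
  have "absv (y ^ Suc k - (\<Sum>i<j0. b i * y ^ i)) < 1" using close_trans[OF e2 e1] .
  thus ?thesis using bO by blast
qed

end

context ds begin

lemma powers_close:
  assumes y1: "absv y = 1" and J: "j0 = Suc J"
    and cO: "\<And>i. i < j0 \<Longrightarrow> c i \<in> Ob"
    and rel: "absv (y ^ j0 - (\<Sum>i<j0. c i * y ^ i)) < 1"
  shows "\<exists>N>0. absv (y ^ N - 1) < 1"
proof -
  have Q: "\<exists>a. (\<forall>i<j0. a i \<in> Ob) \<and> absv (y ^ k - (\<Sum>i<j0. a i * y ^ i)) < 1" for k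
  proof (induction k)
    case 0
    define a where "a i = (if i = 0 then 1 else (0::'c))" for i :: nat
    have "(\<Sum>i<j0. a i * y ^ i) = 1" unfolding J a_def by (subst sum.lessThan_Suc_shift) simp
    moreover have "\<forall>i<j0. a i \<in> Ob" unfolding a_def Ob_def using subf(1,2)[OF Ksub] by auto
    ultimately show ?case by (intro exI[of _ a]) simp
  next
    case (Suc k)
    then obtain a where "\<forall>i<j0. a i \<in> Ob" "absv (y ^ k - (\<Sum>i<j0. a i * y ^ i)) < 1" by blast
    thus ?case using step_rel[OF y1 J cO rel] by blast
  qed
  obtain T where T: "finite T" "T \<subseteq> K" "\<forall>u\<in>K. absv u \<le> 1 \<longrightarrow> (\<exists>t\<in>T. absv (u - t) < 1)"
    using reps by blast
  define \<Phi> where "\<Phi> = PiE {..<j0} (\<lambda>_. T)"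
  have finPhi: "finite \<Phi>" unfolding \<Phi>_def using T(1) by (intro finite_PiE) auto
  have R: "\<exists>t\<in>\<Phi>. absv (y ^ k - (\<Sum>i<j0. t i * y ^ i)) < 1" for k
  proof -
    obtain a where a: "\<forall>i<j0. a i \<in> Ob" "absv (y ^ k - (\<Sum>i<j0. a i * y ^ i)) < 1" using Q by blast
    have ex: "\<exists>t. t \<in> T \<and> absv (a i - t) < 1" if "i < j0" for i
      using a(1) that T(3) unfolding Ob_def by blast
    define t where "t i = (if i < j0 then (SOME t. t \<in> T \<and> absv (a i - t) < 1) else undefined)" for i
    have t: "t i \<in> T" "absv (a i - t i) < 1" if "i < j0" for i
      unfolding t_def using someI_ex[OF ex[OF that]] that by auto
    have tP: "t \<in> \<Phi>" unfolding \<Phi>_def using t by (auto simp: PiE_def extensional_def t_def)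
    have "absv ((\<Sum>i<j0. a i * y ^ i) - (\<Sum>i<j0. t i * y ^ i)) < 1"
    proof -
      have "(\<Sum>i<j0. a i * y ^ i) - (\<Sum>i<j0. t i * y ^ i) = (\<Sum>i<j0. (a i - t i) * y ^ i)"
        by (simp add: sum_subtractf algebra_simps)
      also have "absv \<dots> < 1" using t(2) y1 by (intro sum_lt) (auto simp: mult pow)
      finally show ?thesis .
    qed
    hence "absv (y ^ k - (\<Sum>i<j0. t i * y ^ i)) < 1" using close_trans[OF a(2)] by blast
    thus ?thesis using tP by blast
  qed
  obtain \<phi> where \<phi>: "\<And>k. \<phi> k \<in> \<Phi>" "\<And>k. absv (y ^ k - (\<Sum>i<j0. \<phi> k i * y ^ i)) < 1"
    using R by metis
  have "range \<phi> \<subseteq> \<Phi>" using \<phi>(1) by auto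
  hence "finite (range \<phi>)" using finPhi finite_subset by blast
  hence "\<not> inj \<phi>" using finite_imageD by blast
  then obtain k1 k2 where k: "k1 < k2" "\<phi> k1 = \<phi> k2" unfolding inj_on_def by (metis UNIV_I linorder_neqE_nat)
  have "absv (y ^ k2 - (\<Sum>i<j0. \<phi> k1 i * y ^ i)) < 1" using \<phi>(2)[of k2] k(2) by simp
  hence "absv ((\<Sum>i<j0. \<phi> k1 i * y ^ i) - y ^ k2) < 1" using commute by simp
  hence c12: "absv (y ^ k1 - y ^ k2) < 1" using close_trans[OF \<phi>(2)[of k1]] by blast
  have "y ^ k2 - y ^ k1 = y ^ k1 * (y ^ (k2 - k1) - 1)"
    using k(1) by (simp add: algebra_simps power_add[symmetric])
  hence "absv (y ^ (k2 - k1) - 1) < 1" using c12 commute[of "y ^ k1"] y1 by (simp add: mult pow)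
  thus ?thesis using k(1) by (intro exI[of _ "k2 - k1"]) auto
qed

end

context ds begin

lemma resid_alg: assumes alg: "algebraic_over (closure_abs absv K) y" and y1: "absv y = 1"
  shows "\<exists>N>0. absv (y ^ N - 1) < 1"
proof -
  obtain P where P: "P \<noteq> 0" "set (coeffs P) \<subseteq> closure_abs absv K" "poly P y = 0"
    using alg unfolding algebraic_over_def by blast
  define n where "n = degree P"
  define e where "e i = coeff P i" for i
  have ecl: "e i \<in> closure_abs absv K" if "i \<le> n" for i
  proof (cases "e i = 0")
    case True thus ?thesis using Kcl subf(1)[OF Ksub] by auto
  next
    case False thus ?thesis using coeff_in_coeffs[OF P(1), of i] that P(2) unfolding e_def n_def by auto
  qed
  define M where "M = Max ((\<lambda>i. absv (e i)) ` {..n})"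
  have eM: "absv (e i) \<le> M" if "i \<le> n" for i unfolding M_def using that by (intro Max_ge) auto
  have Mpos: "M > 0"
  proof -
    have "e n \<noteq> 0" using P(1) unfolding e_def n_def by simp
    hence "absv (e n) > 0" using pos_iff by blast
    thus ?thesis using eM[of n] by simp
  qed
  have "M \<in> (\<lambda>i. absv (e i)) ` {..n}" unfolding M_def by (intro Max_in) auto
  then obtain i0 where i0: "i0 \<le> n" "absv (e i0) = M" by auto
  define JJ where "JJ = {j. j \<le> n \<and> absv (e j) = M}"
  have fJJ: "finite JJ" unfolding JJ_def by auto
  have "i0 \<in> JJ" unfolding JJ_def using i0 by auto
  define j0 where "j0 = Max JJ"
  have j0: "j0 \<in> JJ" unfolding j0_def using fJJ \<open>i0 \<in> JJ\<close> by (intro Max_in) auto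
  have j0n: "j0 \<le> n" "absv (e j0) = M" using j0 unfolding JJ_def by auto
  have above: "absv (e i) < M" if "j0 < i" "i \<le> n" for i
  proof -
    have "i \<notin> JJ" using that Max_ge[OF fJJ, of i] unfolding j0_def by auto
    thus ?thesis using eM[OF that(2)] that(2) unfolding JJ_def by auto
  qed
  have "\<forall>i. \<exists>x. x \<in> K \<and> (i \<le> n \<longrightarrow> absv (e i - x) < M)"
  proof
    fix i
    show "\<exists>x. x \<in> K \<and> (i \<le> n \<longrightarrow> absv (e i - x) < M)"
    proof (cases "i \<le> n")
      case True
      then obtain x where "x \<in> K" "absv (e i - x) < M" using ecl[OF True] Mpos unfolding closure_abs_def by blast
      thus ?thesis by blast
    next
      case False thus ?thesis using subf(1)[OF Ksub] by blast
    qed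
  qed
  then obtain f where f: "\<And>i. f i \<in> K" "\<And>i. i \<le> n \<Longrightarrow> absv (e i - f i) < M" by metis
  have fle: "absv (f i) \<le> M" if "i \<le> n" for i
  proof -
    have "f i = e i - (e i - f i)" by simp
    hence "absv (f i) \<le> max (absv (e i)) (absv (e i - f i))" using ultra_diff by metis
    thus ?thesis using eM[OF that] f(2)[OF that] by simp
  qed
  have fj0: "absv (f j0) = M"
  proof -
    have "absv (f j0 - e j0) < absv (e j0)" using f(2)[OF j0n(1)] j0n(2) commute by simp
    hence "absv (e j0 + (f j0 - e j0)) = absv (e j0)" by (rule strict_lt)
    thus ?thesis using j0n(2) by simp
  qed
  have fab: "absv (f i) < M" if "j0 < i" "i \<le> n" for i
  proof -
    have "f i = e i - (e i - f i)" by simp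
    hence "absv (f i) \<le> max (absv (e i)) (absv (e i - f i))" using ultra_diff by metis
    thus ?thesis using above[OF that] f(2)[OF that(2)] by simp
  qed
  have fsum: "absv (\<Sum>i\<le>n. f i * y ^ i) < M"
  proof -
    have "(\<Sum>i\<le>n. e i * y ^ i) = 0" using P(3) unfolding e_def n_def poly_altdef by simp
    hence "(\<Sum>i\<le>n. f i * y ^ i) = (\<Sum>i\<le>n. (f i - e i) * y ^ i)"
      by (simp add: sum_subtractf algebra_simps)
    also have "absv \<dots> < M" using f(2) y1 Mpos commute by (intro sum_lt) (auto simp: mult pow)
    finally show ?thesis .
  qed
  have f0: "f j0 \<noteq> 0" using fj0 Mpos by auto
  define g where "g i = f i / f j0" for i
  have gK: "g i \<in> K" for i unfolding g_def by (rule subf_div[OF Ksub f(1) f(1)])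
  have gle: "absv (g i) \<le> 1" if "i \<le> n" for i unfolding g_def divide fj0 using fle[OF that] Mpos by simp
  have gj0: "g j0 = 1" unfolding g_def using f0 by simp
  have gab: "absv (g i) < 1" if "j0 < i" "i \<le> n" for i unfolding g_def divide fj0 using fab[OF that] Mpos by simp
  have gsum: "absv (\<Sum>i\<le>n. g i * y ^ i) < 1"
  proof -
    have "(\<Sum>i\<le>n. g i * y ^ i) = (\<Sum>i\<le>n. f i * y ^ i) / f j0"
      unfolding g_def by (simp add: sum_divide_distrib)
    thus ?thesis using fsum Mpos by (simp add: divide fj0)
  qed
  define c where "c i = - g i" for i
  have split: "(\<Sum>i\<le>n. g i * y ^ i) = (\<Sum>i<j0. g i * y ^ i) + y ^ j0 + (\<Sum>i\<in>{Suc j0..n}. g i * y ^ i)"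
  proof -
    have u: "{..n} = {..<j0} \<union> {j0..n}" using j0n(1) by auto
    have u2: "{j0..n} = insert j0 {Suc j0..n}" using j0n(1) by auto
    have "(\<Sum>i\<le>n. g i * y ^ i) = (\<Sum>i<j0. g i * y ^ i) + (\<Sum>i\<in>{j0..n}. g i * y ^ i)"
      unfolding u by (rule sum.union_disjoint) auto
    also have "(\<Sum>i\<in>{j0..n}. g i * y ^ i) = y ^ j0 + (\<Sum>i\<in>{Suc j0..n}. g i * y ^ i)"
      unfolding u2 using gj0 by (subst sum.insert) auto
    finally show ?thesis by (simp add: add.assoc)
  qed
  have tail: "absv (\<Sum>i\<in>{Suc j0..n}. g i * y ^ i) < 1"
    using gab y1 by (intro sum_lt) (auto simp: mult pow)
  have "y ^ j0 - (\<Sum>i<j0. c i * y ^ i) = (\<Sum>i\<le>n. g i * y ^ i) - (\<Sum>i\<in>{Suc j0..n}. g i * y ^ i)"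
    unfolding split c_def by (simp add: sum_negf)
  hence rel: "absv (y ^ j0 - (\<Sum>i<j0. c i * y ^ i)) < 1"
    using ultra_diff[of "\<Sum>i\<le>n. g i * y ^ i" "\<Sum>i\<in>{Suc j0..n}. g i * y ^ i"] gsum tail by simp
  have cO: "c i \<in> Ob" if "i < j0" for i
    unfolding c_def Ob_def using gK[of i] subf(5)[OF Ksub] gle[of i] that j0n(1) by auto
  show ?thesis
  proof (cases j0)
    case 0 thus ?thesis using rel by simp
  next
    case (Suc J) thus ?thesis using powers_close[OF y1 Suc cO rel] by blast
  qed
qed

lemma EXIST: assumes "absv w = 1" shows "\<exists>\<zeta>\<in>roots_of_unity. absv (w - \<zeta>) < 1"
proof -
  have "w \<in> closure_abs absv {x. algebraic_over (closure_abs absv K) x}" using dense by simp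
  then obtain s where s: "algebraic_over (closure_abs absv K) s" "absv (w - s) < 1"
    unfolding closure_abs_def by force
  have "absv (s - w) < absv w" using s(2) assms commute by simp
  hence "absv (w + (s - w)) = absv w" by (rule strict_lt)
  hence s1: "absv s = 1" using assms by simp
  obtain N where N: "N > 0" "absv (s ^ N - 1) < 1" using resid_alg[OF s(1) s1] by blast
  obtain \<zeta> where z: "\<zeta> ^ N = 1" "absv (s - \<zeta>) < 1" using near_root[OF N(2,1)] by blast
  have "\<zeta> \<in> roots_of_unity" unfolding roots_of_unity_def using z N by blast
  moreover have "absv (w - \<zeta>) < 1" using close_trans[OF s(2) z(2)] .
  ultimately show ?thesis by blast
qed

lemma div_root: assumes "\<zeta> \<in> roots_of_unity" shows "absv (w / \<zeta> - 1) = absv (w - \<zeta>)"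
proof -
  have z0: "\<zeta> \<noteq> 0" using root_nz[OF assms] .
  have "w / \<zeta> - 1 = (w - \<zeta>) / \<zeta>" using z0 by (simp add: field_simps)
  thus ?thesis using root_abs[OF assms] by (simp add: divide)
qed

lemma SGN1: assumes "absv w = 1"
  shows "sgn1 absv w \<in> roots_of_unity \<and> absv (w - sgn1 absv w) < 1"
proof -
  have ex1: "\<exists>!\<zeta>. \<zeta> \<in> roots_of_unity \<and> absv (w / \<zeta> - 1) < 1"
  proof -
    obtain \<zeta> where z: "\<zeta> \<in> roots_of_unity" "absv (w - \<zeta>) < 1" using EXIST[OF assms] by blast
    show ?thesis
    proof (rule ex1I[of _ \<zeta>])
      show "\<zeta> \<in> roots_of_unity \<and> absv (w / \<zeta> - 1) < 1" using z div_root[OF z(1)] by simp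
      fix \<xi> assume x: "\<xi> \<in> roots_of_unity \<and> absv (w / \<xi> - 1) < 1"
      hence "absv (w - \<xi>) < 1" using div_root[of \<xi> w] by simp
      hence "absv (\<xi> - w) < 1" using commute by simp
      hence "absv (\<xi> - \<zeta>) < 1" using close_trans z(2) by blast
      thus "\<xi> = \<zeta>" using uniq x z(1) by blast
    qed
  qed
  have "sgn1 absv w \<in> roots_of_unity \<and> absv (w / sgn1 absv w - 1) < 1"
    unfolding sgn1_def by (rule theI'[OF ex1])
  thus ?thesis using div_root[of "sgn1 absv w" w] by simp
qed

lemma SGN1_eq: assumes "absv w = 1" "\<zeta> \<in> roots_of_unity" "absv (w - \<zeta>) < 1"
  shows "sgn1 absv w = \<zeta>"
proof -
  have s: "sgn1 absv w \<in> roots_of_unity" "absv (w - sgn1 absv w) < 1" using SGN1[OF assms(1)] by auto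
  have "absv (sgn1 absv w - w) < 1" using s(2) commute by simp
  hence "absv (sgn1 absv w - \<zeta>) < 1" using close_trans assms(3) by blast
  thus ?thesis using uniq s(1) assms(2) by blast
qed

end

context ds begin

lemma ultra_lt: "absv a < e \<Longrightarrow> absv b < e \<Longrightarrow> absv (a + b) < e"
  using ultra[of a b] by (simp add: max_def split: if_splits)

abbreviation sg where "sg \<equiv> sgnC absv q d \<rho>"

lemma sg_prop: assumes "z \<noteq> 0"
  shows "sg z \<in> roots_of_unity" "absv (z * \<rho> (Az z) - sg z) < 1" "absv (z * \<rho> (Az z)) = 1"
  using SGN1[OF Az_prop(2)[OF assms]] Az_prop(2)[OF assms] unfolding sgnC_def' by auto

lemma Az_same: assumes "x \<noteq> 0" "absv y = absv x" shows "Az y = Az x"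
  using Az_eq[of y "Az x"] Az_prop(1)[OF assms(1)] assms(2) by simp

lemma abs_rhoAz: assumes "z \<noteq> 0" shows "absv (\<rho> (Az z)) = 1 / absv z"
proof -
  have h: "absv z * absv (\<rho> (Az z)) = 1" using Az_prop(2)[OF assms] by (simp add: mult)
  have p: "absv z > 0" using assms pos_iff by blast
  have "absv (\<rho> (Az z)) = (absv z * absv (\<rho> (Az z))) / absv z"
    by (rule nonzero_mult_div_cancel_left[symmetric]) (use p in linarith)
  thus ?thesis using h by simp
qed

lemma sg_dom: assumes "x \<noteq> 0" "absv y < absv x" shows "sg (x + y) = sg x"
proof -
  have ax: "absv (x + y) = absv x" using strict_lt[OF assms(2)] .
  have s0: "x + y \<noteq> 0" using ax assms(1) by auto
  have az: "Az (x + y) = Az x" using Az_same[OF assms(1) ax] .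
  define a where "a = Az x"
  have xp: "absv x > 0" using assms(1) pos_iff by blast
  have "absv (y * \<rho> a) < 1" unfolding a_def mult abs_rhoAz[OF assms(1)] using assms(2) xp by simp
  moreover have "absv (x * \<rho> a - sg x) < 1" unfolding a_def using sg_prop(2)[OF assms(1)] .
  moreover have "(x + y) * \<rho> a - sg x = (x * \<rho> a - sg x) + y * \<rho> a" by (simp add: algebra_simps)
  ultimately have "absv ((x + y) * \<rho> a - sg x) < 1" using ultra_lt by metis
  moreover have "absv ((x + y) * \<rho> a) = 1" using sg_prop(3)[OF s0] az unfolding a_def by simp
  ultimately have "sgn1 absv ((x + y) * \<rho> a) = sg x" using SGN1_eq sg_prop(1)[OF assms(1)] by blast
  thus ?thesis unfolding sgnC_def' az a_def .
qed

lemma sg_eq: assumes "x \<noteq> 0" "y \<noteq> 0" "absv y = absv x" "absv (x + y) = absv x"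
  shows "absv (sg (x + y) - (sg x + sg y)) < 1"
proof -
  have s0: "x + y \<noteq> 0" using assms(1,4) by auto
  have a1: "Az y = Az x" using Az_same[OF assms(1,3)] .
  have a2: "Az (x + y) = Az x" using Az_same[OF assms(1,4)] .
  define a where "a = Az x"
  have h1: "absv ((x + y) * \<rho> a - sg (x + y)) < 1" using sg_prop(2)[OF s0] a2 unfolding a_def by simp
  have h2: "absv (x * \<rho> a - sg x) < 1" using sg_prop(2)[OF assms(1)] unfolding a_def by simp
  have h3: "absv (y * \<rho> a - sg y) < 1" using sg_prop(2)[OF assms(2)] a1 unfolding a_def by simp
  have e: "sg (x + y) - (sg x + sg y) = - ((x + y) * \<rho> a - sg (x + y)) + ((x * \<rho> a - sg x) + (y * \<rho> a - sg y))"
    by (simp add: algebra_simps)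
  have k1: "absv ((x * \<rho> a - sg x) + (y * \<rho> a - sg y)) < 1" by (rule ultra_lt[OF h2 h3])
  have k2: "absv (- ((x + y) * \<rho> a - sg (x + y))) < 1" using h1 by (simp only: minus)
  have "absv (- ((x + y) * \<rho> a - sg (x + y)) + ((x * \<rho> a - sg x) + (y * \<rho> a - sg y))) < 1"
    by (rule ultra_lt[OF k2 k1])
  thus ?thesis unfolding e .
qed

lemma sg_mult: assumes "x \<noteq> 0" "y \<noteq> 0" shows "sg (x * y) = sg x * sg y"
proof -
  have xy: "x * y \<noteq> 0" using assms by simp
  have "absv (x * y) = real q powr (real d * of_rat (Az x)) * real q powr (real d * of_rat (Az y))"
    using Az_prop(1)[OF assms(1)] Az_prop(1)[OF assms(2)] by (simp add: mult)
  also have "\<dots> = real q powr (real d * of_rat (Az x + Az y))" by (simp add: powr_add[symmetric] of_rat_add algebra_simps)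
  finally have az: "Az (x * y) = Az x + Az y" by (rule Az_eq)
  define u where "u = x * \<rho> (Az x)"
  define v where "v = y * \<rho> (Az y)"
  have uv: "x * y * \<rho> (Az (x * y)) = u * v" unfolding az u_def v_def rhoadd by (simp add: algebra_simps)
  have u1: "absv u = 1" "absv v = 1" unfolding u_def v_def using sg_prop(3) assms by auto
  have c1: "absv (u - sg x) < 1" "absv (v - sg y) < 1" unfolding u_def v_def using sg_prop(2) assms by auto
  have r: "sg x \<in> roots_of_unity" "sg y \<in> roots_of_unity" using sg_prop(1) assms by auto
  have "u * v - sg x * sg y = (u - sg x) * v + sg x * (v - sg y)" by (simp add: algebra_simps)
  moreover have "absv ((u - sg x) * v) < 1" using c1 u1 by (simp add: mult)
  moreover have "absv (sg x * (v - sg y)) < 1" using c1 root_abs[OF r(1)] by (simp add: mult)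
  ultimately have "absv (u * v - sg x * sg y) < 1" using ultra_lt by metis
  moreover have "absv (u * v) = 1" using u1 by (simp add: mult)
  ultimately have "sgn1 absv (u * v) = sg x * sg y" using SGN1_eq root_mult[OF r] by blast
  thus ?thesis unfolding sgnC_def' uv .
qed

lemma sg_K_fin: "finite (sg ` (K - {0}))"
proof -
  obtain T where T: "finite T" "T \<subseteq> K" "\<forall>u\<in>K. absv u \<le> 1 \<longrightarrow> (\<exists>t\<in>T. absv (u - t) < 1)"
    using reps by blast
  have "sg ` (K - {0}) \<subseteq> sgn1 absv ` T"
  proof
    fix z assume "z \<in> sg ` (K - {0})"
    then obtain x where x: "x \<in> K" "x \<noteq> 0" "z = sg x" by blast
    obtain e where e: "absv x = real q powr (real d * of_int e)" using Kval[OF x(1,2)] by blast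
    have "absv x = real q powr (real d * of_rat (of_int e))" using e by simp
    hence az: "Az x = of_int e" by (rule Az_eq)
    define u where "u = x * \<pi> powi e"
    have uK: "u \<in> K" unfolding u_def by (rule subf(4)[OF Ksub x(1) subf_powi[OF Ksub piK]])
    have uu: "x * \<rho> (Az x) = u" unfolding az u_def rho_int ..
    have u1: "absv u = 1" using sg_prop(3)[OF x(2)] uu by simp
    have zu: "z = sgn1 absv u" using x(3) uu unfolding sgnC_def' by simp
    obtain t where t: "t \<in> T" "absv (u - t) < 1" using T(3) uK u1 by auto
    have "absv (t - u) < absv u" using t(2) u1 commute by simp
    hence "absv (u + (t - u)) = absv u" by (rule strict_lt)
    hence t1: "absv t = 1" using u1 by simp
    have st: "sgn1 absv t \<in> roots_of_unity" "absv (t - sgn1 absv t) < 1" using SGN1[OF t1] by auto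
    have "absv (u - sgn1 absv t) < 1" using close_trans[OF t(2) st(2)] .
    hence "sgn1 absv u = sgn1 absv t" using SGN1_eq[OF u1 st(1)] by blast
    thus "z \<in> sgn1 absv ` T" using zu t(1) by blast
  qed
  thus ?thesis using T(1) finite_subset by blast
qed

lemma near_fin: "finite {\<zeta>\<in>roots_of_unity. absv (\<zeta> - b) < 1}"
proof (cases "{\<zeta>\<in>roots_of_unity. absv (\<zeta> - b) < 1} = {}")
  case False
  then obtain z0 where z0: "z0 \<in> roots_of_unity" "absv (z0 - b) < 1" by blast
  have "{\<zeta>\<in>roots_of_unity. absv (\<zeta> - b) < 1} \<subseteq> {z0}"
  proof
    fix z assume z: "z \<in> {\<zeta>\<in>roots_of_unity. absv (\<zeta> - b) < 1}"
    have "absv (b - z0) < 1" using z0(2) commute by simp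
    hence "absv (z - z0) < 1" using z close_trans by blast
    thus "z \<in> {z0}" using uniq z z0(1) by blast
  qed
  thus ?thesis using finite_subset by blast
next
  case True show ?thesis by (subst True) simp
qed

definition Vs :: "'c set \<Rightarrow> 'c set" where
  "Vs G = {\<Sum>g\<in>G. c g * g | c. \<forall>g\<in>G. c g \<in> K}"

lemma Vs_0: "0 \<in> Vs G"
  unfolding Vs_def using subf(1)[OF Ksub] by (auto intro!: exI[of _ "\<lambda>_. 0"])

lemma Vs_diff: assumes "v \<in> Vs G" "w \<in> Vs G" shows "v - w \<in> Vs G"
proof -
  obtain c where c: "\<forall>g\<in>G. c g \<in> K" "v = (\<Sum>g\<in>G. c g * g)" using assms(1) unfolding Vs_def by blast
  obtain c' where c': "\<forall>g\<in>G. c' g \<in> K" "w = (\<Sum>g\<in>G. c' g * g)" using assms(2) unfolding Vs_def by blast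
  have "v - w = (\<Sum>g\<in>G. (c g - c' g) * g)" unfolding c c' by (simp add: sum_subtractf algebra_simps)
  moreover have "\<forall>g\<in>G. c g - c' g \<in> K" using c c' subf_diff[OF Ksub] by blast
  ultimately have "\<exists>c''. v - w = (\<Sum>g\<in>G. c'' g * g) \<and> (\<forall>g\<in>G. c'' g \<in> K)" by (intro exI[of _ "\<lambda>g. c g - c' g"]) simp
  thus ?thesis unfolding Vs_def by blast
qed

lemma Vs_scale: assumes "v \<in> Vs G" "a \<in> K" shows "a * v \<in> Vs G"
proof -
  obtain c where c: "\<forall>g\<in>G. c g \<in> K" "v = (\<Sum>g\<in>G. c g * g)" using assms(1) unfolding Vs_def by blast
  have "a * v = (\<Sum>g\<in>G. (a * c g) * g)" unfolding c by (simp add: sum_distrib_left algebra_simps)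
  moreover have "\<forall>g\<in>G. a * c g \<in> K" using c assms(2) subf(4)[OF Ksub] by blast
  ultimately have "\<exists>c''. a * v = (\<Sum>g\<in>G. c'' g * g) \<and> (\<forall>g\<in>G. c'' g \<in> K)" by (intro exI[of _ "\<lambda>g. a * c g"]) simp
  thus ?thesis unfolding Vs_def by blast
qed

lemma Vs_insert: assumes "finite G" "g \<notin> G" "w \<in> Vs (insert g G)"
  shows "\<exists>v\<in>Vs G. \<exists>a\<in>K. w = v + a * g"
proof -
  obtain c where c: "\<forall>h\<in>insert g G. c h \<in> K" "w = (\<Sum>h\<in>insert g G. c h * h)" using assms(3) unfolding Vs_def by blast
  have "w = (\<Sum>h\<in>G. c h * h) + c g * g" unfolding c(2) using assms(1,2) by (simp add: add.commute)
  moreover have "(\<Sum>h\<in>G. c h * h) \<in> Vs G" unfolding Vs_def using c(1) by blast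
  ultimately show ?thesis using c(1) by blast
qed

lemma Vs_empty: "Vs {} = {0}" unfolding Vs_def by auto

end

context ds begin

lemma span_step:
  assumes fG: "finite G" and gG: "g \<notin> G" and IH: "finite (sg ` (Vs G - {0}))"
  shows "finite (sg ` (Vs (insert g G) - {0}))"
proof -
  define V where "V = Vs G"
  define X where "X = sg ` (V - {0})"
  define SK where "SK = sg ` (K - {0})"
  define Mn where "Mn = {v\<in>V. g + v \<noteq> 0 \<and> (\<forall>v'\<in>V. absv (g + v) \<le> absv (g + v'))}"
  define v0 where "v0 = (SOME v. v \<in> Mn)"
  define \<sigma>0 where "\<sigma>0 = sg (g + v0)"
  define Y where "Y = X \<union> {\<sigma>0} \<union> (\<Union>s\<in>X. {\<zeta>\<in>roots_of_unity. absv (\<zeta> - (\<sigma>0 + s)) < 1})"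
  have fX: "finite X" using IH unfolding X_def V_def .
  have fY: "finite Y" unfolding Y_def using fX near_fin by auto
  have fSK: "finite SK" unfolding SK_def by (rule sg_K_fin)
  have claim: "sg (g + v) \<in> Y" if v: "v \<in> V" "g + v \<noteq> 0" for v
  proof (cases "\<exists>v'\<in>V. absv (g + v') < absv (g + v)")
    case True
    then obtain v' where v': "v' \<in> V" "absv (g + v') < absv (g + v)" by blast
    have e: "(v - v') + (g + v') = g + v" by simp
    have "absv (g + v) = absv ((g + v) + - (g + v'))" 
    proof -
      have "absv (- (g + v')) < absv (g + v)" using v' by (simp only: minus)
      thus ?thesis by (rule strict_lt[symmetric])
    qed
    hence av: "absv (v - v') = absv (g + v)" by (simp add: algebra_simps)
    hence vv0: "v - v' \<noteq> 0" using v(2) by auto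
    have "sg ((v - v') + (g + v')) = sg (v - v')" using vv0 v' av by (intro sg_dom) auto
    hence "sg (g + v) = sg (v - v')" using e by simp
    moreover have "v - v' \<in> V" unfolding V_def using Vs_diff v v' unfolding V_def by blast
    ultimately show ?thesis unfolding Y_def X_def using vv0 by blast
  next
    case False
    hence vMn: "v \<in> Mn" unfolding Mn_def using v by (auto simp: not_less)
    hence v0: "v0 \<in> Mn" unfolding v0_def by (rule someI)
    hence v0V: "v0 \<in> V" "g + v0 \<noteq> 0" "\<forall>v'\<in>V. absv (g + v0) \<le> absv (g + v')" unfolding Mn_def by auto
    have eqa: "absv (g + v) = absv (g + v0)" using v0V(3) vMn v(1) v0V(1) unfolding Mn_def by (simp add: order_antisym)
    define u where "u = v - v0"
    have uV: "u \<in> V" unfolding u_def V_def using Vs_diff v(1) v0V(1) unfolding V_def by blast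
    have gu: "g + v = (g + v0) + u" unfolding u_def by simp
    have ule: "absv u \<le> absv (g + v0)"
    proof -
      have "u = (g + v) - (g + v0)" unfolding u_def by simp
      hence "absv u \<le> max (absv (g + v)) (absv (g + v0))" using ultra_diff by metis
      thus ?thesis using eqa by simp
    qed
    show ?thesis
    proof (cases "u = 0")
      case True thus ?thesis unfolding Y_def \<sigma>0_def using gu by simp
    next
      case u0: False
      show ?thesis
      proof (cases "absv u < absv (g + v0)")
        case True
        have "sg ((g + v0) + u) = sg (g + v0)" by (rule sg_dom[OF v0V(2) True])
        hence "sg (g + v) = \<sigma>0" unfolding \<sigma>0_def gu .
        thus ?thesis unfolding Y_def by simp
      next
        case False
        hence ueq: "absv u = absv (g + v0)" using ule by simp
        have "absv (sg ((g + v0) + u) - (sg (g + v0) + sg u)) < 1"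
          by (rule sg_eq[OF v0V(2) u0 ueq]) (use gu eqa in \<open>simp only:\<close>)
        hence "absv (sg (g + v) - (\<sigma>0 + sg u)) < 1" unfolding \<sigma>0_def gu .
        moreover have "sg (g + v) \<in> roots_of_unity" using sg_prop(1)[OF v(2)] .
        moreover have "sg u \<in> X" unfolding X_def using uV u0 by blast
        ultimately show ?thesis unfolding Y_def by blast
      qed
    qed
  qed
  have "sg ` (Vs (insert g G) - {0}) \<subseteq> X \<union> (\<lambda>(a, b). a * b) ` (SK \<times> Y)"
  proof
    fix z assume "z \<in> sg ` (Vs (insert g G) - {0})"
    then obtain w where w: "w \<in> Vs (insert g G)" "w \<noteq> 0" "z = sg w" by blast
    obtain v a where va: "v \<in> V" "a \<in> K" "w = v + a * g" using Vs_insert[OF fG gG w(1)] unfolding V_def by blast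
    show "z \<in> X \<union> (\<lambda>(a, b). a * b) ` (SK \<times> Y)"
    proof (cases "a = 0")
      case True thus ?thesis using va w unfolding X_def by auto
    next
      case False
      have ia: "inverse a \<in> K" using subf(6)[OF Ksub va(2)] .
      have v': "inverse a * v \<in> V" using Vs_scale[of v G "inverse a"] va(1) ia unfolding V_def by simp
      have wa: "w = a * (g + inverse a * v)" using va(3) False by (simp add: algebra_simps)
      have nz: "g + inverse a * v \<noteq> 0" using wa w(2) by auto
      have "z = sg a * sg (g + inverse a * v)" using w(3) wa sg_mult[OF False nz] by simp
      moreover have "sg a \<in> SK" unfolding SK_def using va(2) False by blast
      moreover have "sg (g + inverse a * v) \<in> Y" using claim[OF v' nz] .
      ultimately show ?thesis by blast
    qed
  qed
  moreover have "finite (X \<union> (\<lambda>(a, b). a * b) ` (SK \<times> Y))" using fX fSK fY by simp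
  ultimately show ?thesis using finite_subset by blast
qed

lemma span_fin: "finite G \<Longrightarrow> finite (sg ` (Vs G - {0}))"
proof (induction G rule: finite_induct)
  case empty thus ?case by (simp add: Vs_empty)
next
  case (insert g G) thus ?case using span_step by blast
qed

lemma roots_N: "finite S \<Longrightarrow> S \<subseteq> roots_of_unity \<Longrightarrow> \<exists>N>0. \<forall>s\<in>S. s ^ N = (1::'c)"
proof (induction S rule: finite_induct)
  case empty thus ?case by (intro exI[of _ 1]) auto
next
  case (insert x S)
  then obtain N where N: "N > 0" "\<forall>s\<in>S. s ^ N = 1" by auto
  obtain n where n: "n > 0" "x ^ n = 1" using insert.prems unfolding roots_of_unity_def by auto
  have "\<forall>s\<in>insert x S. s ^ (N * n) = 1"
  proof
    fix s assume "s \<in> insert x S"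
    thus "s ^ (N * n) = 1"
    proof
      assume "s = x"
      hence "s ^ (N * n) = (x ^ n) ^ N" by (simp add: power_mult[symmetric] mult.commute)
      thus ?thesis using n by simp
    next
      assume "s \<in> S"
      hence "s ^ (N * n) = (s ^ N) ^ n" by (simp add: power_mult)
      thus ?thesis using N \<open>s \<in> S\<close> by simp
    qed
  qed
  thus ?case using N n by (intro exI[of _ "N * n"]) auto
qed

lemma gen_fin: assumes "finite S" "S \<subseteq> roots_of_unity" shows "finite (gen_subgroup (S::'c set))"
proof -
  obtain N where N: "N > 0" "\<forall>s\<in>S. s ^ N = 1" using roots_N[OF assms] by blast
  have sub: "gen_subgroup S \<subseteq> {z. z ^ N = 1}"
  proof
    fix z assume "z \<in> gen_subgroup S"
    thus "z \<in> {z. z ^ N = 1}"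
    proof (induction rule: gen_subgroup.induct)
      case one thus ?case by simp
    next
      case (gen x) thus ?case using N by simp
    next
      case (mult x y) thus ?case by (simp add: power_mult_distrib)
    next
      case (inv x) thus ?case by (simp add: power_inverse)
    qed
  qed
  define p where "p = (monom (1::'c) N + [:-1:])"
  have pe: "\<And>x. poly p x = x ^ N - 1" unfolding p_def by (simp add: poly_monom)
  have "p \<noteq> 0"
  proof
    assume "p = 0" hence "poly p 0 = 0" by simp
    thus False using pe[of 0] N(1) by (simp add: power_0_left)
  qed
  hence "finite {x. poly p x = 0}" by (rule poly_roots_finite)
  moreover have "{z. z ^ N = 1} = {x. poly p x = 0}" using pe by auto
  ultimately have "finite {z::'c. z ^ N = 1}" by simp
  thus ?thesis using sub by (rule finite_subset[rotated])
qed

end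

theorem mainTheorem8:
  fixes absv :: "'c::field \<Rightarrow> real" and F K :: "'c set" and q d :: nat
    and \<pi> :: 'c and \<rho> :: "rat \<Rightarrow> 'c" and r :: nat and L :: "'c set"
  assumes "drinfeld_setting absv F K q d \<pi> \<rho>"
    and "A_lattice absv (ring_A absv F K) r L"
  shows "finite (gen_subgroup (sgnC absv q d \<rho> ` (L - {0})))"
proof -
  interpret ds absv F K q d \<pi> \<rho> using assms(1) by unfold_locales
  have "\<exists>G. finite G \<and> G \<subseteq> L \<and> L = {\<Sum>g\<in>G. a g * g | a. \<forall>g\<in>G. a g \<in> ring_A absv F K}"
    using assms(2) unfolding A_lattice_def apply (elim conjE) by assumption
  then obtain G where G: "finite G" "L = {\<Sum>g\<in>G. a g * g | a. \<forall>g\<in>G. a g \<in> ring_A absv F K}"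
    by blast
  have AK: "\<And>x. x \<in> ring_A absv F K \<Longrightarrow> x \<in> K" unfolding ring_A_def by simp
  have LV: "L \<subseteq> Vs G"
  proof
    fix x assume "x \<in> L"
    then obtain a where a: "x = (\<Sum>g\<in>G. a g * g)" "\<forall>g\<in>G. a g \<in> ring_A absv F K" unfolding G(2) by blast
    have "\<forall>g\<in>G. a g \<in> K" using a(2) AK by blast
    hence "\<exists>c. x = (\<Sum>g\<in>G. c g * g) \<and> (\<forall>g\<in>G. c g \<in> K)" using a(1) by blast
    thus "x \<in> Vs G" unfolding Vs_def by simp
  qed
  have S: "sg ` (L - {0}) \<subseteq> sg ` (Vs G - {0})" using LV by (intro image_mono) auto
  have fS: "finite (sg ` (L - {0}))" using finite_subset[OF S span_fin[OF G(1)]] .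
  have rS: "sg ` (L - {0}) \<subseteq> roots_of_unity" using sg_prop(1) by auto
  show ?thesis by (rule gen_fin[OF fS rS])
qed

end
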